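(* Let $m\ge2$ and $n\ge1$ be integers, let $a\in\mathbb{R}\setminus\mathbb{Z}^-$ (where $\mathbb{Z}^-=\{k\in\mathbb{Z}:k\le0\}$), and let $\mathcal{H}_n$ be the $m$-order $n$-dimensional generalized Hilbert tensor with entries $$\mathcal{H}_{i_1\cdots i_m}=\frac{1}{i_1+\cdots+i_m-m+a},\quad i_1,\dots,i_m\in\{1,\dots,n\}.$$ Let $$M(a)=\begin{cases}\frac1a, & a>0,\\ \frac{1}{\min\{a-[a],\,1+[a]-a\}}, & -m(n-1)<a<0,\\ \frac{1}{-m(n-1)-a}, & a<-m(n-1),\end{cases}$$ where $[a]$ denotes the largest integer not exceeding $a$. Then (i) if $m$ is even, $|\lambda|\le M(a)\,n^{m-1}$ for every $H$-eigenvalue $\lambda$ of $\mathcal{H}_n$; (ii) $|\mu|\le M(a)\,n^{\frac m2}$ for every $Z$-eigenvalue $\mu$ of $\mathcal{H}_n$.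
   Context: For an $m$-order $n$-dimensional real tensor $\mathcal{A}=(a_{i_1\cdots i_m})$ and $x\in\mathbb{C}^n$, $\mathcal{A}x^{m-1}$ is the vector with $i$-th component $\sum_{i_2,\dots,i_m=1}^n a_{i i_2\cdots i_m}x_{i_2}\cdots x_{i_m}$, and $x^{[m-1]}=(x_1^{m-1},\dots,x_n^{m-1})^\top$. A real number $\lambda$ is an $H$-eigenvalue of $\mathcal{A}$ if there is a nonzero $x\in\mathbb{R}^n$ with $\mathcal{A}x^{m-1}=\lambda x^{[m-1]}$. A real number $\mu$ is a $Z$-eigenvalue of $\mathcal{A}$ if there is a nonzero $x\in\mathbb{R}^n$ with $\mathcal{A}x^{m-1}=\mu\, x\,(x^\top x)^{\frac{m-2}{2}}$. *)

theory Defs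
  imports Complex_Main
begin

text \<open>An m-order n-dimensional real tensor is represented by its entry function on
index lists [i_1,...,i_m] with entries in {1..n}; vectors in R^n are functions
nat => real, of which only the components 1..n are relevant.\<close>

definition idx_lists :: "nat \<Rightarrow> nat \<Rightarrow> nat list set" where
  "idx_lists k n = {js. length js = k \<and> set js \<subseteq> {1..n}}"

definition tensor_apply :: "nat \<Rightarrow> nat \<Rightarrow> (nat list \<Rightarrow> real) \<Rightarrow> (nat \<Rightarrow> real) \<Rightarrow> nat \<Rightarrow> real" where
  "tensor_apply m n A x i = (\<Sum>js\<in>idx_lists (m - 1) n. A (i # js) * prod_list (map x js))"

definition nonzero_vec :: "nat \<Rightarrow> (nat \<Rightarrow> real) \<Rightarrow> bool" where
  "nonzero_vec n x \<longleftrightarrow> (\<exists>i\<in>{1..n}. x i \<noteq> 0)"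

definition H_eigenvalue :: "nat \<Rightarrow> nat \<Rightarrow> (nat list \<Rightarrow> real) \<Rightarrow> real \<Rightarrow> bool" where
  "H_eigenvalue m n A lam \<longleftrightarrow> (\<exists>x. nonzero_vec n x \<and>
     (\<forall>i\<in>{1..n}. tensor_apply m n A x i = lam * x i ^ (m - 1)))"

definition Z_eigenvalue :: "nat \<Rightarrow> nat \<Rightarrow> (nat list \<Rightarrow> real) \<Rightarrow> real \<Rightarrow> bool" where
  "Z_eigenvalue m n A mu \<longleftrightarrow> (\<exists>x. nonzero_vec n x \<and>
     (\<forall>i\<in>{1..n}. tensor_apply m n A x i =
        mu * x i * (\<Sum>j=1..n. x j ^ 2) powr ((real m - 2) / 2)))"

definition gen_hilbert :: "nat \<Rightarrow> real \<Rightarrow> nat list \<Rightarrow> real" where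
  "gen_hilbert m a js = 1 / (real (sum_list js) - real m + a)"

definition M_bound :: "nat \<Rightarrow> nat \<Rightarrow> real \<Rightarrow> real" where
  "M_bound m n a =
    (if a > 0 then 1 / a
     else if - real (m * (n - 1)) < a \<and> a < 0
       then 1 / min (a - of_int \<lfloor>a\<rfloor>) (1 + of_int \<lfloor>a\<rfloor> - a)
     else 1 / (- real (m * (n - 1)) - a))"

end

theory Submission
  imports Defs
begin

lemma cs_sum:
  fixes f :: "nat \<Rightarrow> real" and A :: "nat set"
  assumes "finite A"
  shows "(\<Sum>j\<in>A. f j)^2 \<le> real (card A) * (\<Sum>j\<in>A. (f j)^2)"
proof (cases "card A = 0")
  case True then show ?thesis using assms by simp
next
  case False
  define c where "c = (\<Sum>j\<in>A. f j) / real (card A)"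
  have "0 \<le> (\<Sum>j\<in>A. (f j - c)^2)" by (intro sum_nonneg) simp
  also have "\<dots> = (\<Sum>j\<in>A. (f j)^2) - 2*c*(\<Sum>j\<in>A. f j) + real (card A) * c^2"
  proof -
    have "(\<Sum>j\<in>A. (f j - c)^2) = (\<Sum>j\<in>A. (f j)^2 - 2*c*f j + c^2)"
      by (intro sum.cong) (auto simp: power2_diff)
    also have "\<dots> = (\<Sum>j\<in>A. (f j)^2) - (\<Sum>j\<in>A. 2*c*f j) + (\<Sum>j\<in>A. c^2)"
      by (simp add: sum.distrib sum_subtractf)
    also have "(\<Sum>j\<in>A. 2*c*f j) = 2*c*(\<Sum>j\<in>A. f j)" by (simp add: sum_distrib_left)
    finally show ?thesis by simp
  qed
  also have "\<dots> = (\<Sum>j\<in>A. (f j)^2) - (\<Sum>j\<in>A. f j)^2 / real (card A)"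
    using False by (simp add: c_def power2_eq_square field_simps)
  finally show ?thesis using False by (simp add: field_simps)
qed

lemma idx_Suc: "idx_lists (Suc k) n = (\<lambda>(j,js). j#js) ` ({1..n} \<times> idx_lists k n)"
  unfolding idx_lists_def by (auto simp: length_Suc_conv image_iff)

lemma idx_0: "idx_lists 0 n = {[]}"
  unfolding idx_lists_def by auto

lemma idx_finite: "finite (idx_lists k n)"
  by (induction k) (auto simp: idx_0 idx_Suc)

lemma idx_sum: fixes f :: "nat \<Rightarrow> 'a::comm_semiring_1" shows "(\<Sum>js\<in>idx_lists k n. prod_list (map f js)) = (\<Sum>j=1..n. f j)^k"
proof (induction k)
  case 0 then show ?case by (simp add: idx_0)
next
  case (Suc k)
  have inj: "inj_on (\<lambda>(j,js). j#js) ({1..n} \<times> idx_lists k n)"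
    by (auto simp: inj_on_def)
  have "(\<Sum>js\<in>idx_lists (Suc k) n. prod_list (map f js))
      = (\<Sum>p\<in>{1..n} \<times> idx_lists k n. prod_list (map f ((\<lambda>(j,js). j#js) p)))"
    unfolding idx_Suc by (subst sum.reindex[OF inj]) (simp add: comp_def)
  also have "\<dots> = (\<Sum>p\<in>{1..n} \<times> idx_lists k n. f (fst p) * prod_list (map f (snd p)))"
    by (intro sum.cong) auto
  also have "\<dots> = (\<Sum>j=1..n. f j) * (\<Sum>js\<in>idx_lists k n. prod_list (map f js))"
  proof -
    have "(\<Sum>j=1..n. f j) * (\<Sum>js\<in>idx_lists k n. prod_list (map f js))
       = (\<Sum>j\<in>{1..n}. \<Sum>js\<in>idx_lists k n. f j * prod_list (map f js))"
      unfolding sum_distrib_right by (simp add: sum_distrib_left)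
    also have "\<dots> = (\<Sum>(j,js)\<in>{1..n} \<times> idx_lists k n. f j * prod_list (map f js))"
      by (rule sum.cartesian_product)
    finally show ?thesis by (simp add: split_def)
  qed
  finally show ?case using Suc by simp
qed

lemma sum_list_bounds: "set js \<subseteq> {1..n} \<Longrightarrow> length js \<le> sum_list js \<and> sum_list js \<le> length js * n"
  by (induction js) auto

lemma abs_prod_list: "\<bar>prod_list (map (x::nat\<Rightarrow>real) js)\<bar> = prod_list (map (\<lambda>j. \<bar>x j\<bar>) js)"
  by (induction js) (auto simp: abs_mult)

lemma entry_bound:
  fixes a :: real
  assumes "\<not> (a \<in> \<int> \<and> a \<le> 0)" and "length js = m" and "set js \<subseteq> {1..n}"
  shows "\<bar>gen_hilbert m a js\<bar> \<le> M_bound m n a"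
proof -
  from sum_list_bounds[OF assms(3)] assms(2)
  have b: "m \<le> sum_list js" "sum_list js \<le> m * n" by auto
  define s where "s = sum_list js - m"
  have sr: "real (sum_list js) - real m = real s" using b by (simp add: s_def)
  have sle: "s \<le> m * (n - 1)" using b by (simp add: s_def diff_mult_distrib2)
  have sle': "real s \<le> real (m * (n - 1))" using sle by linarith
  have g: "gen_hilbert m a js = 1 / (real s + a)" by (simp add: gen_hilbert_def sr)
  show ?thesis
  proof (cases "a > 0")
    case True
    then show ?thesis by (simp add: g M_bound_def frac_le)
  next
    case nA: False
    then have an: "a \<notin> \<int>" using assms(1) by auto
    then have a0: "a < 0" using nA by (metis Ints_0 linorder_neqE_linordered_idom)
    show ?thesis
    proof (cases "- real (m * (n - 1)) < a")
      case True
      define f where "f = a - of_int \<lfloor>a\<rfloor>"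
      have f0: "0 < f" using an unfolding f_def
        by (metis Ints_of_int diff_gt_0_iff_gt floor_le_iff less_eq_real_def of_int_floor_le)
      have f1: "f < 1" unfolding f_def by linarith
      define k where "k = int s + \<lfloor>a\<rfloor>"
      have d: "real s + a = of_int k + f" by (simp add: k_def f_def)
      have "min f (1 - f) \<le> \<bar>real s + a\<bar>"
      proof (cases "k \<ge> 0")
        case True then show ?thesis using d f0 by simp
      next
        case False then have "of_int k \<le> (-1::real)" by simp
        then show ?thesis using d f1 by simp
      qed
      moreover have "0 < min f (1 - f)" using f0 f1 by simp
      ultimately have "1 / \<bar>real s + a\<bar> \<le> 1 / min f (1 - f)"
        by (intro divide_left_mono) auto
      then show ?thesis using True a0
        by (simp add: g M_bound_def f_def abs_divide algebra_simps)
    next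
      case False
      then have "a \<noteq> - real (m * (n - 1))" using an by (metis Ints_minus Ints_of_nat)
      with False have lt: "a < - real (m * (n - 1))" by simp
      then have pos: "0 < - real (m * (n - 1)) - a" by simp
      have "- real (m * (n - 1)) - a \<le> \<bar>real s + a\<bar>" using sle' lt by linarith
      then have "1 / \<bar>real s + a\<bar> \<le> 1 / (- real (m * (n - 1)) - a)"
        using pos by (intro divide_left_mono) auto
      then show ?thesis using False nA
        by (simp add: g M_bound_def abs_divide)
    qed
  qed
qed

lemma apply_bound:
  assumes "\<not> (a \<in> \<int> \<and> a \<le> 0)" and "m \<ge> 1" and "i \<in> {1..n}"
  shows "\<bar>tensor_apply m n (gen_hilbert m a) x i\<bar> \<le> M_bound m n a * (\<Sum>j=1..n. \<bar>x j\<bar>)^(m-1)"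
proof -
  have "\<bar>tensor_apply m n (gen_hilbert m a) x i\<bar>
      \<le> (\<Sum>js\<in>idx_lists (m - 1) n. \<bar>gen_hilbert m a (i # js) * prod_list (map x js)\<bar>)"
    unfolding tensor_apply_def by (rule sum_abs)
  also have "\<dots> \<le> (\<Sum>js\<in>idx_lists (m - 1) n. M_bound m n a * prod_list (map (\<lambda>j. \<bar>x j\<bar>) js))"
  proof (intro sum_mono)
    fix js assume js: "js \<in> idx_lists (m - 1) n"
    have "\<bar>gen_hilbert m a (i # js)\<bar> \<le> M_bound m n a"
      using js assms by (intro entry_bound) (auto simp: idx_lists_def)
    moreover have "0 \<le> prod_list (map (\<lambda>j. \<bar>x j\<bar>) js)" by (induction js) auto
    ultimately show "\<bar>gen_hilbert m a (i # js) * prod_list (map x js)\<bar>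
        \<le> M_bound m n a * prod_list (map (\<lambda>j. \<bar>x j\<bar>) js)"
      by (simp add: abs_mult abs_prod_list mult_right_mono)
  qed
  also have "\<dots> = M_bound m n a * (\<Sum>j=1..n. \<bar>x j\<bar>)^(m-1)"
    by (simp add: sum_distrib_left[symmetric] idx_sum)
  finally show ?thesis .
qed

lemma max_comp:
  assumes "nonzero_vec n x"
  shows "\<exists>i\<in>{1..n}. 0 < \<bar>x i\<bar> \<and> (\<forall>j\<in>{1..n}. \<bar>x j\<bar> \<le> \<bar>x i\<bar>)"
proof -
  obtain k where k: "k \<in> {1..n}" "x k \<noteq> 0" using assms unfolding nonzero_vec_def by auto
  have fin: "finite ((\<lambda>j. \<bar>x j\<bar>) ` {1..n})" and ne: "(\<lambda>j. \<bar>x j\<bar>) ` {1..n} \<noteq> {}" using k by auto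
  obtain i where i: "i \<in> {1..n}" "\<bar>x i\<bar> = Max ((\<lambda>j. \<bar>x j\<bar>) ` {1..n})"
    using Max_in[OF fin ne] by auto
  have "\<forall>j\<in>{1..n}. \<bar>x j\<bar> \<le> \<bar>x i\<bar>" using i fin by auto
  moreover have "0 < \<bar>x i\<bar>" using k calculation by fastforce
  ultimately show ?thesis using i by blast
qed

lemma M_nonneg:
  assumes "\<not> (a \<in> \<int> \<and> a \<le> 0)" "n \<ge> 1"
  shows "0 \<le> M_bound m n a"
proof -
  have "\<bar>gen_hilbert m a (replicate m 1)\<bar> \<le> M_bound m n a"
    using assms by (intro entry_bound) auto
  then show ?thesis by linarith
qed

theorem theorem3p4:
  fixes m n :: nat and a :: real
  assumes "m \<ge> 2" and "n \<ge> 1"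
    and "\<not> (a \<in> \<int> \<and> a \<le> 0)"
  shows "(even m \<longrightarrow> (\<forall>lam. H_eigenvalue m n (gen_hilbert m a) lam \<longrightarrow>
             \<bar>lam\<bar> \<le> M_bound m n a * real n ^ (m - 1)))
       \<and> (\<forall>mu. Z_eigenvalue m n (gen_hilbert m a) mu \<longrightarrow>
             \<bar>mu\<bar> \<le> M_bound m n a * real n powr (real m / 2))"

proof (intro conjI impI allI)
  have M0: "0 \<le> M_bound m n a" using M_nonneg assms by auto
  define M where "M = M_bound m n a"
  fix lam assume "even m" and "H_eigenvalue m n (gen_hilbert m a) lam"
  then obtain x where nz: "nonzero_vec n x" and eq: "\<forall>i\<in>{1..n}. tensor_apply m n (gen_hilbert m a) x i = lam * x i ^ (m - 1)"
    unfolding H_eigenvalue_def by auto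
  obtain i where i: "i \<in> {1..n}" "0 < \<bar>x i\<bar>" "\<forall>j\<in>{1..n}. \<bar>x j\<bar> \<le> \<bar>x i\<bar>" using max_comp[OF nz] by blast
  define t where "t = \<bar>x i\<bar>"
  have sb: "(\<Sum>j=1..n. \<bar>x j\<bar>) \<le> real n * t"
    using sum_bounded_above[of "{1..n}" "\<lambda>j. \<bar>x j\<bar>" t] i(3) by (simp add: t_def)
  have "\<bar>lam\<bar> * t^(m-1) = \<bar>tensor_apply m n (gen_hilbert m a) x i\<bar>"
    using eq i(1) by (simp add: t_def abs_mult power_abs)
  also have "\<dots> \<le> M * (\<Sum>j=1..n. \<bar>x j\<bar>)^(m-1)" unfolding M_def
    using apply_bound[OF assms(3) _ i(1)] assms(1) by auto
  also have "\<dots> \<le> M * (real n * t)^(m-1)"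
    using sb M0 unfolding M_def by (intro mult_left_mono power_mono) (auto intro: sum_nonneg)
  finally have "\<bar>lam\<bar> * t^(m-1) \<le> (M * real n^(m-1)) * t^(m-1)" by (simp add: power_mult_distrib mult.assoc)
  moreover have "0 < t^(m-1)" using i(2) t_def by simp
  ultimately show "\<bar>lam\<bar> \<le> M_bound m n a * real n ^ (m - 1)" unfolding M_def by simp
next
  have M0: "0 \<le> M_bound m n a" using M_nonneg assms by auto
  define M where "M = M_bound m n a"
  fix mu assume "Z_eigenvalue m n (gen_hilbert m a) mu"
  then obtain x where nz: "nonzero_vec n x" and eq: "\<forall>i\<in>{1..n}. tensor_apply m n (gen_hilbert m a) x i =
        mu * x i * (\<Sum>j=1..n. x j ^ 2) powr ((real m - 2) / 2)"
    unfolding Z_eigenvalue_def by auto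
  obtain i where i: "i \<in> {1..n}" "0 < \<bar>x i\<bar>" "\<forall>j\<in>{1..n}. \<bar>x j\<bar> \<le> \<bar>x i\<bar>" using max_comp[OF nz] by blast
  define t where "t = \<bar>x i\<bar>"
  define S where "S = (\<Sum>j=1..n. x j ^ 2)"
  define q where "q = sqrt S"
  have St: "t^2 \<le> S" unfolding S_def t_def
    using member_le_sum[of i "{1..n}" "\<lambda>j. x j ^ 2"] i(1) by auto
  have t0: "0 < t" using i(2) t_def by simp
  have S0: "0 < S" using St t0 by (smt (verit) zero_less_power)
  have q0: "0 < q" using S0 q_def by simp
  have Sq: "S = q^2" using S0 q_def by simp
  have Sle: "S \<le> real n * t^2" unfolding S_def
    using sum_bounded_above[of "{1..n}" "\<lambda>j. x j ^ 2" "t^2"] i(3) t_def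
    by (simp add: abs_le_square_iff)
  have qt: "q \<le> sqrt (real n) * t"
  proof -
    have "q \<le> sqrt (real n * t^2)" using Sle q_def by simp
    also have "\<dots> = sqrt (real n) * t" using t0 by (simp add: real_sqrt_mult)
    finally show ?thesis .
  qed
  have cs: "(\<Sum>j=1..n. \<bar>x j\<bar>) \<le> sqrt (real n) * q"
  proof -
    have "(\<Sum>j=1..n. \<bar>x j\<bar>)^2 \<le> real n * S"
      using cs_sum[of "{1..n}" "\<lambda>j. \<bar>x j\<bar>"] by (simp add: S_def)
    then have "sqrt ((\<Sum>j=1..n. \<bar>x j\<bar>)^2) \<le> sqrt (real n * S)" by (rule real_sqrt_le_mono)
    then show ?thesis by (simp add: real_sqrt_mult q_def)
  qed
  have pw: "S powr ((real m - 2) / 2) = q^(m-2)"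
  proof -
    have "S powr ((real m - 2) / 2) = (q powr 2) powr ((real m - 2) / 2)"
      using Sq q0 by (simp add: powr_numeral)
    also have "\<dots> = q powr (2 * ((real m - 2) / 2))" by (simp add: powr_powr)
    also have "\<dots> = q powr (real (m - 2))"
      by (rule arg_cong[where f="\<lambda>r. q powr r"]) (use assms(1) in \<open>simp add: of_nat_diff\<close>)
    also have "\<dots> = q^(m-2)" using q0 by (simp add: powr_realpow)
    finally show ?thesis .
  qed
  have pn: "real n powr (real m / 2) = sqrt (real n) ^ m"
  proof -
    have "real n powr (real m / 2) = (sqrt (real n) powr 2) powr (real m / 2)"
      using assms(2) by (simp add: powr_numeral)
    also have "\<dots> = sqrt (real n) powr (real m)" by (subst powr_powr) simp
    also have "\<dots> = sqrt (real n) ^ m" using assms(2) by (simp add: powr_realpow)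
    finally show ?thesis .
  qed
  have "\<bar>mu\<bar> * t * q^(m-2) = \<bar>tensor_apply m n (gen_hilbert m a) x i\<bar>"
  proof -
    have "tensor_apply m n (gen_hilbert m a) x i = mu * x i * q^(m-2)"
      using eq i(1) pw unfolding S_def by simp
    then show ?thesis using q0 by (simp add: t_def abs_mult)
  qed
  also have "\<dots> \<le> M * (\<Sum>j=1..n. \<bar>x j\<bar>)^(m-1)" unfolding M_def
    using apply_bound[OF assms(3) _ i(1)] assms(1) by auto
  also have "\<dots> \<le> M * (sqrt (real n) * q)^(m-1)"
    using cs M0 unfolding M_def by (intro mult_left_mono power_mono) (auto intro: sum_nonneg)
  also have "\<dots> = (M * sqrt (real n)^(m-1) * q) * q^(m-2)"
  proof -
    have "m - 1 = Suc (m - 2)" using assms(1) by simp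
    then show ?thesis by (simp add: power_mult_distrib)
  qed
  finally have "\<bar>mu\<bar> * t * q^(m-2) \<le> (M * sqrt (real n)^(m-1) * q) * q^(m-2)" .
  then have "\<bar>mu\<bar> * t \<le> M * sqrt (real n)^(m-1) * q" using q0 by simp
  also have "\<dots> \<le> M * sqrt (real n)^(m-1) * (sqrt (real n) * t)"
    using qt M0 unfolding M_def by (intro mult_left_mono) auto
  also have "\<dots> = (M * sqrt (real n)^m) * t"
  proof -
    have "m = Suc (m - 1)" using assms(1) by simp
    then have "sqrt (real n)^m = sqrt (real n)^(m-1) * sqrt (real n)"
      by (metis power_Suc2)
    then show ?thesis by simp
  qed
  finally have "\<bar>mu\<bar> * t \<le> (M * sqrt (real n)^m) * t" .
  then have "\<bar>mu\<bar> \<le> M * sqrt (real n)^m" using t0 by simp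
  then show "\<bar>mu\<bar> \<le> M_bound m n a * real n powr (real m / 2)" by (simp add: pn M_def)
qed

end
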